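(* Let $(A,\mu,\alpha,\beta)$ be a BiHom-associative algebra and $r=\sum_i x_i\otimes y_i\in A\otimes A$ with $(\alpha\otimes\alpha)(r)=r=(\beta\otimes\beta)(r)$, and suppose $r$ is a solution of the associative BiHom-Yang-Baxter equation. Define $R:A\to A$ by $R(a)=\sum_i\alpha\beta^3(x_i)\,(a\,\alpha^3(y_i))$ (which equals $\sum_i(\beta^3(x_i)\,a)\,\alpha^3\beta(y_i)$). Then $R$ commutes with $\alpha$ and $\beta$ and satisfies $R(\alpha\beta(a))R(\alpha\beta(b))=R\big(\alpha\beta(a)R(b)+R(a)\alpha\beta(b)\big)$ for all $a,b\in A$, i.e. $R$ is an $\alpha\beta$-Rota-Baxter operator.
   Context: A BiHom-associative algebra $(A,\mu,\alpha,\beta)$: linear space with bilinear $\mu(x\otimes y)=xy$ and linear maps $\alpha,\beta$ with $\alpha\beta=\beta\alpha$, both multiplicative, and $\alpha(x)(yz)=(xy)\beta(z)$ for all $x,y,z$. For $r=\sum_i x_i\otimes y_i$ with $(\alpha\otimes\alpha)(r)=r=(\beta\otimes\beta)(r)$, $r$ is a solution of the associative BiHom-Yang-Baxter equation if $\sum_{i,j}\alpha(x_i)\otimes y_ix_j\otimes\beta(y_j)=\sum_{i,j}x_ix_j\otimes\beta(y_j)\otimes\beta(y_i)+\sum_{i,j}\alpha(x_i)\otimes\alpha(x_j)\otimes y_jy_i$ in $A\otimes A\otimes A$. *)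

theory Defs
  imports Complex_Main
begin

text \<open>An algebra over an arbitrary field 'k: the carrier type 'a is a 'k-vector space
  via the scalar multiplication scale; mu is the (bilinear) multiplication.\<close>

definition bilinear_map :: "('k::field \<Rightarrow> 'a::ab_group_add \<Rightarrow> 'a) \<Rightarrow> ('k \<Rightarrow> 'b::ab_group_add \<Rightarrow> 'b)
    \<Rightarrow> ('a \<Rightarrow> 'a \<Rightarrow> 'b) \<Rightarrow> bool" where
  "bilinear_map s t f \<longleftrightarrow>
     (\<forall>x. Vector_Spaces.linear s t (f x)) \<and> (\<forall>y. Vector_Spaces.linear s t (\<lambda>x. f x y))"

definition trilinear_map :: "('k::field \<Rightarrow> 'a::ab_group_add \<Rightarrow> 'a) \<Rightarrow> ('k \<Rightarrow> 'b::ab_group_add \<Rightarrow> 'b)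
    \<Rightarrow> ('a \<Rightarrow> 'a \<Rightarrow> 'a \<Rightarrow> 'b) \<Rightarrow> bool" where
  "trilinear_map s t f \<longleftrightarrow>
     (\<forall>y z. Vector_Spaces.linear s t (\<lambda>x. f x y z)) \<and>
     (\<forall>x z. Vector_Spaces.linear s t (\<lambda>y. f x y z)) \<and>
     (\<forall>x y. Vector_Spaces.linear s t (\<lambda>z. f x y z))"

definition bihom_assoc_alg :: "('k::field \<Rightarrow> 'a::ab_group_add \<Rightarrow> 'a) \<Rightarrow> ('a \<Rightarrow> 'a \<Rightarrow> 'a)
    \<Rightarrow> ('a \<Rightarrow> 'a) \<Rightarrow> ('a \<Rightarrow> 'a) \<Rightarrow> bool" where
  "bihom_assoc_alg s mu alpha beta \<longleftrightarrow>
     vector_space s \<and> bilinear_map s s mu \<and>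
     Vector_Spaces.linear s s alpha \<and> Vector_Spaces.linear s s beta \<and>
     alpha \<circ> beta = beta \<circ> alpha \<and>
     (\<forall>x y. alpha (mu x y) = mu (alpha x) (alpha y)) \<and>
     (\<forall>x y. beta (mu x y) = mu (beta x) (beta y)) \<and>
     (\<forall>x y z. mu (alpha x) (mu y z) = mu (mu x y) (beta z))"

text \<open>Elements of A \<otimes> A (resp. A \<otimes> A \<otimes> A) are represented by finite lists of
  elementary tensors: the list [(x1,y1),...,(xn,yn)] stands for sum_i x_i \<otimes> y_i.
  Two such representatives denote the same element of the tensor product over the field 'k
  iff every bilinear (resp. trilinear) form A \<times> A \<rightarrow> 'k takes the same value on them
  (universal property of the tensor product plus the fact that linear functionals
  separate points of a vector space).\<close>

definition tensor2_eq :: "('k::field \<Rightarrow> 'a::ab_group_add \<Rightarrow> 'a) \<Rightarrow> ('a \<times> 'a) list \<Rightarrow> ('a \<times> 'a) list \<Rightarrow> bool" where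
  "tensor2_eq s r r' \<longleftrightarrow>
     (\<forall>f :: 'a \<Rightarrow> 'a \<Rightarrow> 'k. bilinear_map s (*) f \<longrightarrow>
        (\<Sum>(x,y)\<leftarrow>r. f x y) = (\<Sum>(x,y)\<leftarrow>r'. f x y))"

definition tensor3_eq :: "('k::field \<Rightarrow> 'a::ab_group_add \<Rightarrow> 'a) \<Rightarrow> ('a \<times> 'a \<times> 'a) list \<Rightarrow> ('a \<times> 'a \<times> 'a) list \<Rightarrow> bool" where
  "tensor3_eq s t t' \<longleftrightarrow>
     (\<forall>f :: 'a \<Rightarrow> 'a \<Rightarrow> 'a \<Rightarrow> 'k. trilinear_map s (*) f \<longrightarrow>
        (\<Sum>(x,y,z)\<leftarrow>t. f x y z) = (\<Sum>(x,y,z)\<leftarrow>t'. f x y z))"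

definition tmap2 :: "('a \<Rightarrow> 'a) \<Rightarrow> ('a \<times> 'a) list \<Rightarrow> ('a \<times> 'a) list" where
  "tmap2 f r = map (\<lambda>(x,y). (f x, f y)) r"

definition bihom_aybe :: "('k::field \<Rightarrow> 'a::ab_group_add \<Rightarrow> 'a) \<Rightarrow> ('a \<Rightarrow> 'a \<Rightarrow> 'a)
    \<Rightarrow> ('a \<Rightarrow> 'a) \<Rightarrow> ('a \<Rightarrow> 'a) \<Rightarrow> ('a \<times> 'a) list \<Rightarrow> bool" where
  "bihom_aybe s mu alpha beta r \<longleftrightarrow>
     tensor3_eq s
       [(alpha xi, mu yi xj, beta yj). (xi,yi) \<leftarrow> r, (xj,yj) \<leftarrow> r]
       ([(mu xi xj, beta yj, beta yi). (xi,yi) \<leftarrow> r, (xj,yj) \<leftarrow> r] @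
        [(alpha xi, alpha xj, mu yj yi). (xi,yi) \<leftarrow> r, (xj,yj) \<leftarrow> r])"

end

theory Submission imports Defs begin

lemma vs_field: "vector_space ((*) :: 'k::field \<Rightarrow> 'k \<Rightarrow> 'k)"
  by unfold_locales (auto simp: algebra_simps)

lemma separate:
  fixes s :: "'k::field \<Rightarrow> 'a::ab_group_add \<Rightarrow> 'a"
  assumes vs: "vector_space s"
    and h: "\<And>\<phi> :: 'a \<Rightarrow> 'k. Vector_Spaces.linear s (*) \<phi> \<Longrightarrow> \<phi> u = \<phi> v"
  shows "u = v"
proof (rule ccontr)
  assume ne: "u \<noteq> v"
  interpret vp: vector_space_pair s "(*) :: 'k \<Rightarrow> 'k \<Rightarrow> 'k"
    using vs vs_field by (simp add: vector_space_pair_def)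
  have "vp.vs1.independent {u - v}"
    using ne vp.vs1.independent_insertI[of "u - v" "{}"]
    by (simp add: vp.vs1.span_empty)
  then obtain g :: "'a \<Rightarrow> 'k" where g: "Vector_Spaces.linear s (*) g" "g (u - v) = 1"
    using vp.linear_independent_extend[of "{u - v}" "\<lambda>_. 1"] by auto
  have "g (u - v) = g u - g v" using vp.linear_diff[OF g(1)] .
  with h[OF g(1)] g(2) show False by simp
qed

lemma lin_sum_list:
  assumes "Vector_Spaces.linear s1 s2 f"
  shows "f (\<Sum>x\<leftarrow>xs. g x) = (\<Sum>x\<leftarrow>xs. f (g x))"
proof -
  have add: "\<And>x y. f (x + y) = f x + f y" using assms by (simp add: Vector_Spaces.linear_iff)
  have z: "f 0 = 0" using add[of 0 0] by simp
  show ?thesis by (induction xs) (simp_all add: add z)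
qed


lemma lin_sum_list2:
  assumes "Vector_Spaces.linear s1 s2 f"
  shows "f (\<Sum>(x,y)\<leftarrow>xs. g x y) = (\<Sum>(x,y)\<leftarrow>xs. f (g x y))"
proof -
  have add: "\<And>x y. f (x + y) = f x + f y" using assms by (simp add: Vector_Spaces.linear_iff)
  have z: "f 0 = 0" using add[of 0 0] by simp
  show ?thesis by (induction xs) (auto simp add: add z)
qed

definition pw :: "('a \<Rightarrow> 'a) \<Rightarrow> ('a \<Rightarrow> 'a) \<Rightarrow> nat \<Rightarrow> nat \<Rightarrow> 'a \<Rightarrow> 'a" where
  "pw al be m n x = (al ^^ m) ((be ^^ n) x)"

context
  fixes s :: "'k::field \<Rightarrow> 'a::ab_group_add \<Rightarrow> 'a"
    and mu :: "'a \<Rightarrow> 'a \<Rightarrow> 'a"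
    and alpha beta :: "'a \<Rightarrow> 'a"
  assumes alg: "bihom_assoc_alg s mu alpha beta"
begin

lemma vs: "vector_space s" using alg by (simp add: bihom_assoc_alg_def)
lemma linA: "Vector_Spaces.linear s s alpha" using alg by (simp add: bihom_assoc_alg_def)
lemma linB: "Vector_Spaces.linear s s beta" using alg by (simp add: bihom_assoc_alg_def)
lemma bil: "bilinear_map s s mu" using alg by (simp add: bihom_assoc_alg_def)
lemma linMuL: "Vector_Spaces.linear s s (\<lambda>x. mu x c)" using bil by (simp add: bilinear_map_def)
lemma linMuR: "Vector_Spaces.linear s s (mu c)" using bil by (simp add: bilinear_map_def)
lemma comm: "alpha (beta x) = beta (alpha x)"
  using alg unfolding bihom_assoc_alg_def by (metis comp_apply)
lemma ma: "alpha (mu x y) = mu (alpha x) (alpha y)" using alg by (simp add: bihom_assoc_alg_def)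
lemma mb: "beta (mu x y) = mu (beta x) (beta y)" using alg by (simp add: bihom_assoc_alg_def)
lemma assoc: "mu (alpha x) (mu y z) = mu (mu x y) (beta z)" using alg by (simp add: bihom_assoc_alg_def)

lemma linComp: "Vector_Spaces.linear s s f \<Longrightarrow> Vector_Spaces.linear s s g \<Longrightarrow> Vector_Spaces.linear s s (\<lambda>x. g (f x))"
  using Vector_Spaces.linear_compose[of s s f s g] by (simp add: o_def)

lemma linL: "Vector_Spaces.linear s s f \<Longrightarrow> Vector_Spaces.linear s s (\<lambda>x. mu (f x) c)"
  using linComp[OF _ linMuL] .
lemma linR: "Vector_Spaces.linear s s f \<Longrightarrow> Vector_Spaces.linear s s (\<lambda>x. mu c (f x))"
  using linComp[OF _ linMuR] .
lemma linId: "Vector_Spaces.linear s s (\<lambda>x. x)"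
  using vector_space.linear_ident[OF vs] .

lemma lin_funpow: "Vector_Spaces.linear s s f \<Longrightarrow> Vector_Spaces.linear s s (f ^^ n)"
proof (induction n)
  case 0 then show ?case using vector_space.linear_id[OF vs] by (simp add: id_def)
next
  case (Suc n) then show ?case using linComp[of "f ^^ n" f] by (simp add: o_def)
qed

lemma linPw: "Vector_Spaces.linear s s (pw alpha beta m n)"
  unfolding pw_def using linComp[OF lin_funpow[OF linB] lin_funpow[OF linA]] by simp

lemma linPw': "Vector_Spaces.linear s s f \<Longrightarrow> Vector_Spaces.linear s s (\<lambda>x. pw alpha beta m n (f x))"
  using linComp[OF _ linPw] .

lemma commN: "(beta ^^ n) ((alpha ^^ p) y) = (alpha ^^ p) ((beta ^^ n) y)"
proof -
  have c1: "beta ((alpha ^^ p) y) = (alpha ^^ p) (beta y)" for y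
    by (induction p) (simp_all add: comm[symmetric])
  show ?thesis by (induction n) (simp_all add: c1)
qed

lemma muN: "(alpha ^^ m) (mu x y) = mu ((alpha ^^ m) x) ((alpha ^^ m) y)"
  "(beta ^^ n) (mu x y) = mu ((beta ^^ n) x) ((beta ^^ n) y)"
  by (induction m) (simp_all add: ma, induction n, simp_all add: mb)

lemma pw_alpha: "alpha x = pw alpha beta 1 0 x" by (simp add: pw_def)
lemma pw_beta: "beta x = pw alpha beta 0 1 x" by (simp add: pw_def)
lemma pw_funa: "(alpha ^^ m) x = pw alpha beta m 0 x" by (simp add: pw_def)
lemma pw_funb: "(beta ^^ m) x = pw alpha beta 0 m x" by (simp add: pw_def)
lemma pw_00: "pw alpha beta 0 0 x = x" by (simp add: pw_def)
lemma pw_pw: "pw alpha beta m n (pw alpha beta p q x) = pw alpha beta (m + p) (n + q) x"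
  by (simp add: pw_def commN funpow_add)
lemma pw_mu: "pw alpha beta m n (mu x y) = mu (pw alpha beta m n x) (pw alpha beta m n y)"
  by (simp add: pw_def muN)

lemmas pws = pw_alpha pw_beta pw_funa pw_funb pw_00 pw_pw pw_mu

lemma pwSa: "pw alpha beta (Suc m) n x = alpha (pw alpha beta m n x)" by (simp add: pw_def)
lemma pwSb: "pw alpha beta 0 (Suc n) x = beta (pw alpha beta 0 n x)" by (simp add: pw_def)

lemma bil_comp: "bilinear_map s s2 G \<Longrightarrow> Vector_Spaces.linear s s h
   \<Longrightarrow> bilinear_map s s2 (\<lambda>x y. G (h x) (h y))"
  unfolding bilinear_map_def
  using Vector_Spaces.linear_compose[of s s h s2] by (auto simp: o_def)

lemma bil_phi: "bilinear_map s s G \<Longrightarrow> Vector_Spaces.linear s s2 \<phi>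
   \<Longrightarrow> bilinear_map s s2 (\<lambda>x y. \<phi> (G x y))"
  unfolding bilinear_map_def
  using Vector_Spaces.linear_compose[of s s _ s2 \<phi>] by (auto simp: o_def)

lemma tri_phi: "trilinear_map s s G \<Longrightarrow> Vector_Spaces.linear s s2 \<phi>
   \<Longrightarrow> trilinear_map s s2 (\<lambda>x y z. \<phi> (G x y z))"
  unfolding trilinear_map_def
  using Vector_Spaces.linear_compose[of s s _ s2 \<phi>] by (auto simp: o_def)

lemma inv_h:
  assumes r: "tensor2_eq s (tmap2 h r) r" and G: "bilinear_map s s G"
  shows "(\<Sum>(x,y)\<leftarrow>r. G (h x) (h y)) = (\<Sum>(x,y)\<leftarrow>r. G x y)"
proof (rule separate[OF vs])
  fix \<phi> :: "'a \<Rightarrow> 'k" assume phi: "Vector_Spaces.linear s (*) \<phi>"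
  have "bilinear_map s (*) (\<lambda>x y. \<phi> (G x y))" by (rule bil_phi[OF G phi])
  then have "(\<Sum>(x,y)\<leftarrow>tmap2 h r. \<phi> (G x y)) = (\<Sum>(x,y)\<leftarrow>r. \<phi> (G x y))"
    using r unfolding tensor2_eq_def by blast
  then show "\<phi> (\<Sum>(x,y)\<leftarrow>r. G (h x) (h y)) = \<phi> (\<Sum>(x,y)\<leftarrow>r. G x y)"
    unfolding lin_sum_list2[OF phi] by (simp add: tmap2_def o_def split_def)
qed

end

context
  fixes s :: "'k::field \<Rightarrow> 'a::ab_group_add \<Rightarrow> 'a"
    and mu :: "'a \<Rightarrow> 'a \<Rightarrow> 'a"
    and alpha beta :: "'a \<Rightarrow> 'a"
    and r :: "('a \<times> 'a) list"
  assumes alg: "bihom_assoc_alg s mu alpha beta"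
    and r_alpha: "tensor2_eq s (tmap2 alpha r) r"
    and r_beta: "tensor2_eq s (tmap2 beta r) r"
begin

lemma inv_pw0:
  "bilinear_map s s G \<Longrightarrow> (\<Sum>(x,y)\<leftarrow>r. G (pw alpha beta 0 n x) (pw alpha beta 0 n y)) = (\<Sum>(x,y)\<leftarrow>r. G x y)"
proof (induction n arbitrary: G)
  case 0 then show ?case by (simp add: pw_00[OF alg])
next
  case (Suc n)
  have "(\<Sum>(x,y)\<leftarrow>r. G (pw alpha beta 0 (Suc n) x) (pw alpha beta 0 (Suc n) y))
     = (\<Sum>(x,y)\<leftarrow>r. (\<lambda>x y. G (beta x) (beta y)) (pw alpha beta 0 n x) (pw alpha beta 0 n y))"
    by (simp add: pwSb[OF alg])
  also have "... = (\<Sum>(x,y)\<leftarrow>r. G (beta x) (beta y))"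
    by (rule Suc.IH[OF bil_comp[OF alg Suc.prems linB[OF alg]]])
  also have "... = (\<Sum>(x,y)\<leftarrow>r. G x y)" by (rule inv_h[OF alg r_beta Suc.prems])
  finally show ?case .
qed

lemma inv_pw:
  "bilinear_map s s G \<Longrightarrow> (\<Sum>(x,y)\<leftarrow>r. G (pw alpha beta m n x) (pw alpha beta m n y)) = (\<Sum>(x,y)\<leftarrow>r. G x y)"
proof (induction m arbitrary: G)
  case 0 then show ?case by (rule inv_pw0)
next
  case (Suc m)
  have "(\<Sum>(x,y)\<leftarrow>r. G (pw alpha beta (Suc m) n x) (pw alpha beta (Suc m) n y))
     = (\<Sum>(x,y)\<leftarrow>r. (\<lambda>x y. G (alpha x) (alpha y)) (pw alpha beta m n x) (pw alpha beta m n y))"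
    by (simp add: pwSa[OF alg])
  also have "... = (\<Sum>(x,y)\<leftarrow>r. G (alpha x) (alpha y))"
    by (rule Suc.IH[OF bil_comp[OF alg Suc.prems linA[OF alg]]])
  also have "... = (\<Sum>(x,y)\<leftarrow>r. G x y)" by (rule inv_h[OF alg r_alpha Suc.prems])
  finally show ?case .
qed

definition Rf :: "'a \<Rightarrow> 'a" where
  "Rf c = (\<Sum>(x,y)\<leftarrow>r. mu (pw alpha beta 1 3 x) (mu c (pw alpha beta 3 0 y)))"

lemma Rshift: "Rf c = (\<Sum>(x,y)\<leftarrow>r. mu (pw alpha beta (Suc p) (3 + q) x) (mu c (pw alpha beta (3 + p) q y)))"
proof -
  have B: "bilinear_map s s (\<lambda>x y. mu (pw alpha beta 1 3 x) (mu c (pw alpha beta 3 0 y)))"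
    unfolding bilinear_map_def
    by (auto intro!: linL[OF alg] linR[OF alg] linPw[OF alg] linPw'[OF alg] linId[OF alg])
  show ?thesis unfolding Rf_def
    using inv_pw[OF B, of p q] by (simp add: pws[OF alg] add.commute)
qed

end

context
  fixes s :: "'k::field \<Rightarrow> 'a::ab_group_add \<Rightarrow> 'a"
    and mu :: "'a \<Rightarrow> 'a \<Rightarrow> 'a"
    and alpha beta :: "'a \<Rightarrow> 'a"
  assumes alg: "bihom_assoc_alg s mu alpha beta"
begin
lemmas pws' = pws[OF alg]
lemmas assoc' = assoc[OF alg]
lemma chain1:
  "(mu (mu (pw alpha beta 3 6 xi) (mu (pw alpha beta 1 1 a) (pw alpha beta 5 3 yi))) (mu (pw alpha beta 4 5 xj) (mu (pw alpha beta 1 1 b) (pw alpha beta 6 2 yj)))) =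
   (mu (pw alpha beta 4 6 xi) (mu (pw alpha beta 2 1 a) (mu (mu (pw alpha beta 4 3 yi) (pw alpha beta 4 3 xj)) (mu (pw alpha beta 1 0 b) (pw alpha beta 6 1 yj)))))"
proof -
  have "(mu (mu (pw alpha beta 3 6 xi) (mu (pw alpha beta 1 1 a) (pw alpha beta 5 3 yi))) (mu (pw alpha beta 4 5 xj) (mu (pw alpha beta 1 1 b) (pw alpha beta 6 2 yj)))) = (mu (mu (mu (pw alpha beta 2 6 xi) (pw alpha beta 1 1 a)) (pw alpha beta 5 4 yi)) (mu (pw alpha beta 4 5 xj) (mu (pw alpha beta 1 1 b) (pw alpha beta 6 2 yj))))" using assoc'[of "(pw alpha beta 2 6 xi)" "(pw alpha beta 1 1 a)" "(pw alpha beta 5 3 yi)"] by (simp add: pws' numeral_eq_Suc)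
  also have "... = (mu (mu (pw alpha beta 3 6 xi) (pw alpha beta 2 1 a)) (mu (pw alpha beta 5 4 yi) (mu (pw alpha beta 4 4 xj) (mu (pw alpha beta 1 0 b) (pw alpha beta 6 1 yj)))))" using assoc'[of "(mu (pw alpha beta 2 6 xi) (pw alpha beta 1 1 a))" "(pw alpha beta 5 4 yi)" "(mu (pw alpha beta 4 4 xj) (mu (pw alpha beta 1 0 b) (pw alpha beta 6 1 yj)))"] by (simp add: pws' numeral_eq_Suc)
  also have "... = (mu (mu (pw alpha beta 3 6 xi) (pw alpha beta 2 1 a)) (mu (mu (pw alpha beta 4 4 yi) (pw alpha beta 4 4 xj)) (mu (pw alpha beta 1 1 b) (pw alpha beta 6 2 yj))))" using assoc'[of "(pw alpha beta 4 4 yi)" "(pw alpha beta 4 4 xj)" "(mu (pw alpha beta 1 0 b) (pw alpha beta 6 1 yj))"] by (simp add: pws' numeral_eq_Suc)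
  also have "... = (mu (pw alpha beta 4 6 xi) (mu (pw alpha beta 2 1 a) (mu (mu (pw alpha beta 4 3 yi) (pw alpha beta 4 3 xj)) (mu (pw alpha beta 1 0 b) (pw alpha beta 6 1 yj)))))" using assoc'[of "(pw alpha beta 3 6 xi)" "(pw alpha beta 2 1 a)" "(mu (mu (pw alpha beta 4 3 yi) (pw alpha beta 4 3 xj)) (mu (pw alpha beta 1 0 b) (pw alpha beta 6 1 yj)))"] by (simp add: pws' numeral_eq_Suc)
  finally show ?thesis .
qed

lemma chain2:
  "(mu (mu (pw alpha beta 3 6 xi) (pw alpha beta 3 6 xj)) (mu (pw alpha beta 2 1 a) (mu (pw alpha beta 4 4 yj) (mu (pw alpha beta 1 0 b) (pw alpha beta 6 1 yi))))) =
   (mu (pw alpha beta 4 6 xi) (mu (mu (mu (pw alpha beta 1 6 xj) (mu a (pw alpha beta 3 3 yj))) (pw alpha beta 1 1 b)) (pw alpha beta 6 3 yi)))"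
proof -
  have "(mu (mu (pw alpha beta 3 6 xi) (pw alpha beta 3 6 xj)) (mu (pw alpha beta 2 1 a) (mu (pw alpha beta 4 4 yj) (mu (pw alpha beta 1 0 b) (pw alpha beta 6 1 yi))))) = (mu (mu (pw alpha beta 3 6 xi) (pw alpha beta 3 6 xj)) (mu (mu (pw alpha beta 1 1 a) (pw alpha beta 4 4 yj)) (mu (pw alpha beta 1 1 b) (pw alpha beta 6 2 yi))))" using assoc'[of "(pw alpha beta 1 1 a)" "(pw alpha beta 4 4 yj)" "(mu (pw alpha beta 1 0 b) (pw alpha beta 6 1 yi))"] by (simp add: pws' numeral_eq_Suc)
  also have "... = (mu (pw alpha beta 4 6 xi) (mu (pw alpha beta 3 6 xj) (mu (mu (pw alpha beta 1 0 a) (pw alpha beta 4 3 yj)) (mu (pw alpha beta 1 0 b) (pw alpha beta 6 1 yi)))))" using assoc'[of "(pw alpha beta 3 6 xi)" "(pw alpha beta 3 6 xj)" "(mu (mu (pw alpha beta 1 0 a) (pw alpha beta 4 3 yj)) (mu (pw alpha beta 1 0 b) (pw alpha beta 6 1 yi)))"] by (simp add: pws' numeral_eq_Suc)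
  also have "... = (mu (pw alpha beta 4 6 xi) (mu (mu (pw alpha beta 2 6 xj) (mu (pw alpha beta 1 0 a) (pw alpha beta 4 3 yj))) (mu (pw alpha beta 1 1 b) (pw alpha beta 6 2 yi))))" using assoc'[of "(pw alpha beta 2 6 xj)" "(mu (pw alpha beta 1 0 a) (pw alpha beta 4 3 yj))" "(mu (pw alpha beta 1 0 b) (pw alpha beta 6 1 yi))"] by (simp add: pws' numeral_eq_Suc)
  also have "... = (mu (pw alpha beta 4 6 xi) (mu (mu (mu (pw alpha beta 1 6 xj) (mu a (pw alpha beta 3 3 yj))) (pw alpha beta 1 1 b)) (pw alpha beta 6 3 yi)))" using assoc'[of "(mu (pw alpha beta 1 6 xj) (mu a (pw alpha beta 3 3 yj)))" "(pw alpha beta 1 1 b)" "(pw alpha beta 6 2 yi)"] by (simp add: pws' numeral_eq_Suc)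
  finally show ?thesis .
qed

lemma chain3:
  "(mu (pw alpha beta 4 6 xi) (mu (pw alpha beta 2 1 a) (mu (pw alpha beta 5 3 xj) (mu (pw alpha beta 1 0 b) (mu (pw alpha beta 6 0 yj) (pw alpha beta 6 0 yi)))))) =
   (mu (pw alpha beta 4 6 xi) (mu (mu (pw alpha beta 1 1 a) (mu (pw alpha beta 4 3 xj) (mu b (pw alpha beta 6 0 yj)))) (pw alpha beta 6 3 yi)))"
proof -
  have "(mu (pw alpha beta 4 6 xi) (mu (pw alpha beta 2 1 a) (mu (pw alpha beta 5 3 xj) (mu (pw alpha beta 1 0 b) (mu (pw alpha beta 6 0 yj) (pw alpha beta 6 0 yi)))))) = (mu (pw alpha beta 4 6 xi) (mu (pw alpha beta 2 1 a) (mu (pw alpha beta 5 3 xj) (mu (mu b (pw alpha beta 6 0 yj)) (pw alpha beta 6 1 yi)))))" using assoc'[of "b" "(pw alpha beta 6 0 yj)" "(pw alpha beta 6 0 yi)"] by (simp add: pws' numeral_eq_Suc)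
  also have "... = (mu (pw alpha beta 4 6 xi) (mu (pw alpha beta 2 1 a) (mu (mu (pw alpha beta 4 3 xj) (mu b (pw alpha beta 6 0 yj))) (pw alpha beta 6 2 yi))))" using assoc'[of "(pw alpha beta 4 3 xj)" "(mu b (pw alpha beta 6 0 yj))" "(pw alpha beta 6 1 yi)"] by (simp add: pws' numeral_eq_Suc)
  also have "... = (mu (pw alpha beta 4 6 xi) (mu (mu (pw alpha beta 1 1 a) (mu (pw alpha beta 4 3 xj) (mu b (pw alpha beta 6 0 yj)))) (pw alpha beta 6 3 yi)))" using assoc'[of "(pw alpha beta 1 1 a)" "(mu (pw alpha beta 4 3 xj) (mu b (pw alpha beta 6 0 yj)))" "(pw alpha beta 6 2 yi)"] by (simp add: pws' numeral_eq_Suc)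
  finally show ?thesis .
qed


end


lemma sum_concat_map: "sum_list (map f (concat xss)) = sum_list (map (\<lambda>xs. sum_list (map f xs)) xss)"
  by (induction xss) auto

context
  fixes s :: "'k::field \<Rightarrow> 'a::ab_group_add \<Rightarrow> 'a"
    and mu :: "'a \<Rightarrow> 'a \<Rightarrow> 'a"
    and alpha beta :: "'a \<Rightarrow> 'a"
    and r :: "('a \<times> 'a) list"
  assumes alg: "bihom_assoc_alg s mu alpha beta"
begin

lemma ybe_sum:
  assumes ybe: "bihom_aybe s mu alpha beta r" and T: "trilinear_map s s Phi"
  shows "(\<Sum>(xi,yi)\<leftarrow>r. \<Sum>(xj,yj)\<leftarrow>r. Phi (alpha xi) (mu yi xj) (beta yj))
    = (\<Sum>(xi,yi)\<leftarrow>r. \<Sum>(xj,yj)\<leftarrow>r. Phi (mu xi xj) (beta yj) (beta yi))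
    + (\<Sum>(xi,yi)\<leftarrow>r. \<Sum>(xj,yj)\<leftarrow>r. Phi (alpha xi) (alpha xj) (mu yj yi))"
proof (rule separate[OF vs[OF alg]])
  fix \<phi> :: "'a \<Rightarrow> 'k" assume phi: "Vector_Spaces.linear s (*) \<phi>"
  have add: "\<And>x y. \<phi> (x + y) = \<phi> x + \<phi> y" using phi by (simp add: Vector_Spaces.linear_iff)
  have "trilinear_map s (*) (\<lambda>x y z. \<phi> (Phi x y z))" by (rule tri_phi[OF alg T phi])
  then have H: "(\<Sum>(x,y,z)\<leftarrow>[(alpha xi, mu yi xj, beta yj). (xi,yi) \<leftarrow> r, (xj,yj) \<leftarrow> r]. \<phi> (Phi x y z)) =
     (\<Sum>(x,y,z)\<leftarrow>([(mu xi xj, beta yj, beta yi). (xi,yi) \<leftarrow> r, (xj,yj) \<leftarrow> r] @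
        [(alpha xi, alpha xj, mu yj yi). (xi,yi) \<leftarrow> r, (xj,yj) \<leftarrow> r]). \<phi> (Phi x y z))"
    using ybe unfolding bihom_aybe_def tensor3_eq_def by blast
  show "\<phi> (\<Sum>(xi,yi)\<leftarrow>r. \<Sum>(xj,yj)\<leftarrow>r. Phi (alpha xi) (mu yi xj) (beta yj)) =
    \<phi> ((\<Sum>(xi,yi)\<leftarrow>r. \<Sum>(xj,yj)\<leftarrow>r. Phi (mu xi xj) (beta yj) (beta yi))
    + (\<Sum>(xi,yi)\<leftarrow>r. \<Sum>(xj,yj)\<leftarrow>r. Phi (alpha xi) (alpha xj) (mu yj yi)))"
    using H unfolding add lin_sum_list2[OF phi]
    by (simp add: sum_concat_map o_def split_def)
qed

lemma muSumL: "mu (\<Sum>(x,y)\<leftarrow>xs. g x y) c = (\<Sum>(x,y)\<leftarrow>xs. mu (g x y) c)"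
  using lin_sum_list2[OF linMuL[OF alg]] .
lemma muSumR: "mu c (\<Sum>(x,y)\<leftarrow>xs. g x y) = (\<Sum>(x,y)\<leftarrow>xs. mu c (g x y))"
  using lin_sum_list2[OF linMuR[OF alg]] .

lemma linSum: "(\<And>x y. Vector_Spaces.linear s s (g x y)) \<Longrightarrow> Vector_Spaces.linear s s (\<lambda>c. \<Sum>(x,y)\<leftarrow>xs. g x y c)"
proof (induction xs)
  case Nil
  interpret vp: vector_space_pair s s using vs[OF alg] by (simp add: vector_space_pair_def)
  show ?case using vp.linear_zero by simp
next
  case (Cons p xs)
  interpret vp: vector_space_pair s s using vs[OF alg] by (simp add: vector_space_pair_def)
  show ?case using vp.linear_compose_add[OF Cons.prems[of "fst p" "snd p"] Cons.IH[OF Cons.prems]]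
    by (simp add: split_def)
qed

end

theorem mainTheorem9:
  fixes s :: "'k::field \<Rightarrow> 'a::ab_group_add \<Rightarrow> 'a"
    and mu :: "'a \<Rightarrow> 'a \<Rightarrow> 'a"
    and alpha beta :: "'a \<Rightarrow> 'a"
    and r :: "('a \<times> 'a) list"
    and R :: "'a \<Rightarrow> 'a"
  assumes alg: "bihom_assoc_alg s mu alpha beta"
    and r_alpha: "tensor2_eq s (tmap2 alpha r) r"
    and r_beta: "tensor2_eq s (tmap2 beta r) r"
    and ybe: "bihom_aybe s mu alpha beta r"
    and R_def: "\<And>a. R a = (\<Sum>(x,y)\<leftarrow>r. mu (alpha ((beta ^^ 3) x)) (mu a ((alpha ^^ 3) y)))"
  shows "Vector_Spaces.linear s s R
    \<and> R \<circ> alpha = alpha \<circ> R \<and> R \<circ> beta = beta \<circ> R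
    \<and> (\<forall>a b. mu (R (alpha (beta a))) (R (alpha (beta b)))
             = R (mu (alpha (beta a)) (R b) + mu (R a) (alpha (beta b))))"
proof -
  note pws' = pws[OF alg]
  have R0: "R c = (\<Sum>(x,y)\<leftarrow>r. mu (pw alpha beta 1 3 x) (mu c (pw alpha beta 3 0 y)))" for c
    by (simp add: R_def pws')
  have Rsh: "R c = (\<Sum>(x,y)\<leftarrow>r. mu (pw alpha beta (Suc p) (3 + q) x) (mu c (pw alpha beta (3 + p) q y)))" for c p q
    proof -
    have "Rf mu alpha beta r c = R c" unfolding R0[of c] by (rule Rf_def[OF alg r_alpha r_beta])
    then show ?thesis using Rshift[OF alg r_alpha r_beta, of c p q] by simp
  qed
  have linRR: "Vector_Spaces.linear s s R"
  proof -
    have "Vector_Spaces.linear s s (\<lambda>c. \<Sum>(x,y)\<leftarrow>r. mu (pw alpha beta 1 3 x) (mu c (pw alpha beta 3 0 y)))"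
      by (rule linSum[OF alg]) (intro linR[OF alg] linL[OF alg] linId[OF alg])
    moreover have "R = (\<lambda>c. \<Sum>(x,y)\<leftarrow>r. mu (pw alpha beta 1 3 x) (mu c (pw alpha beta 3 0 y)))"
      using R0 by auto
    ultimately show ?thesis by simp
  qed
  have cA: "R \<circ> alpha = alpha \<circ> R"
  proof
    fix c
    show "(R \<circ> alpha) c = (alpha \<circ> R) c"
      using Rsh[of "alpha c" 1 0] unfolding o_def R0[of c] lin_sum_list2[OF linA[OF alg]]
      by (simp add: pws' numeral_eq_Suc)
  qed
  have cB: "R \<circ> beta = beta \<circ> R"
  proof
    fix c
    show "(R \<circ> beta) c = (beta \<circ> R) c"
      using Rsh[of "beta c" 0 1] unfolding o_def R0[of c] lin_sum_list2[OF linB[OF alg]]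
      by (simp add: pws' numeral_eq_Suc)
  qed
  have RB: "mu (R (alpha (beta a))) (R (alpha (beta b)))
             = R (mu (alpha (beta a)) (R b) + mu (R a) (alpha (beta b)))" for a b
  proof -
    define F where "F = (\<lambda>u v w. mu (pw alpha beta 3 6 u) (mu (pw alpha beta 2 1 a) (mu (pw alpha beta 4 3 v) (mu (pw alpha beta 1 0 b) (pw alpha beta 6 0 w)))))"
    have triF: "trilinear_map s s F" unfolding F_def trilinear_map_def
      by (intro allI conjI linR[OF alg] linL[OF alg] linPw'[OF alg] linId[OF alg])
    note Y = ybe_sum[OF alg ybe triF]
    have A1: "R (alpha (beta a)) = (\<Sum>(x,y)\<leftarrow>r. mu (pw alpha beta 3 6 x) (mu (pw alpha beta 1 1 a) (pw alpha beta 5 3 y)))"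
      using Rsh[of _ 2 3] by (simp add: pws' numeral_eq_Suc)
    have B1: "R (alpha (beta b)) = (\<Sum>(x,y)\<leftarrow>r. mu (pw alpha beta 4 5 x) (mu (pw alpha beta 1 1 b) (pw alpha beta 6 2 y)))"
      using Rsh[of _ 3 2] by (simp add: pws' numeral_eq_Suc)
    have e1: "mu (R (alpha (beta a))) (R (alpha (beta b))) = (\<Sum>(xi,yi)\<leftarrow>r. \<Sum>(xj,yj)\<leftarrow>r. (mu (mu (pw alpha beta 3 6 xi) (mu (pw alpha beta 1 1 a) (pw alpha beta 5 3 yi))) (mu (pw alpha beta 4 5 xj) (mu (pw alpha beta 1 1 b) (pw alpha beta 6 2 yj)))))"
      unfolding A1 B1 muSumL[OF alg] unfolding muSumR[OF alg] by simp
    also have "... = (\<Sum>(xi,yi)\<leftarrow>r. \<Sum>(xj,yj)\<leftarrow>r. (mu (pw alpha beta 4 6 xi) (mu (pw alpha beta 2 1 a) (mu (mu (pw alpha beta 4 3 yi) (pw alpha beta 4 3 xj)) (mu (pw alpha beta 1 0 b) (pw alpha beta 6 1 yj))))))"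
      by (simp only: chain1[OF alg])
    also have "... = (\<Sum>(xi,yi)\<leftarrow>r. \<Sum>(xj,yj)\<leftarrow>r. F (alpha xi) (mu yi xj) (beta yj))"
      by (simp add: F_def pws' numeral_eq_Suc)
    also have "... = (\<Sum>(xi,yi)\<leftarrow>r. \<Sum>(xj,yj)\<leftarrow>r. F (mu xi xj) (beta yj) (beta yi))
    + (\<Sum>(xi,yi)\<leftarrow>r. \<Sum>(xj,yj)\<leftarrow>r. F (alpha xi) (alpha xj) (mu yj yi))" by (rule Y)
    also have "(\<Sum>(xi,yi)\<leftarrow>r. \<Sum>(xj,yj)\<leftarrow>r. F (mu xi xj) (beta yj) (beta yi))
       = (\<Sum>(xi,yi)\<leftarrow>r. \<Sum>(xj,yj)\<leftarrow>r. (mu (mu (pw alpha beta 3 6 xi) (pw alpha beta 3 6 xj)) (mu (pw alpha beta 2 1 a) (mu (pw alpha beta 4 4 yj) (mu (pw alpha beta 1 0 b) (pw alpha beta 6 1 yi))))))"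
      by (simp add: F_def pws' numeral_eq_Suc)
    also have "... = (\<Sum>(xi,yi)\<leftarrow>r. \<Sum>(xj,yj)\<leftarrow>r. (mu (pw alpha beta 4 6 xi) (mu (mu (mu (pw alpha beta 1 6 xj) (mu a (pw alpha beta 3 3 yj))) (pw alpha beta 1 1 b)) (pw alpha beta 6 3 yi))))"
      by (simp only: chain2[OF alg])
    also have "... = R (mu (R a) (alpha (beta b)))"
    proof -
      have Ra: "R a = (\<Sum>(xj,yj)\<leftarrow>r. mu (pw alpha beta 1 6 xj) (mu a (pw alpha beta 3 3 yj)))"
        using Rsh[of _ 0 3] by (simp add: pws' numeral_eq_Suc)
      have "R (mu (R a) (alpha (beta b))) = (\<Sum>(xi,yi)\<leftarrow>r. mu (pw alpha beta 4 6 xi) (mu (mu (R a) (pw alpha beta 1 1 b)) (pw alpha beta 6 3 yi)))"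
        using Rsh[of _ 3 3] by (simp add: pws' numeral_eq_Suc)
      then show ?thesis unfolding Ra muSumL[OF alg] muSumR[OF alg] by simp
    qed
    also have "(\<Sum>(xi,yi)\<leftarrow>r. \<Sum>(xj,yj)\<leftarrow>r. F (alpha xi) (alpha xj) (mu yj yi))
       = (\<Sum>(xi,yi)\<leftarrow>r. \<Sum>(xj,yj)\<leftarrow>r. (mu (pw alpha beta 4 6 xi) (mu (pw alpha beta 2 1 a) (mu (pw alpha beta 5 3 xj) (mu (pw alpha beta 1 0 b) (mu (pw alpha beta 6 0 yj) (pw alpha beta 6 0 yi)))))))"
      by (simp add: F_def pws' numeral_eq_Suc)
    also have "... = (\<Sum>(xi,yi)\<leftarrow>r. \<Sum>(xj,yj)\<leftarrow>r. (mu (pw alpha beta 4 6 xi) (mu (mu (pw alpha beta 1 1 a) (mu (pw alpha beta 4 3 xj) (mu b (pw alpha beta 6 0 yj)))) (pw alpha beta 6 3 yi))))"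
      by (simp only: chain3[OF alg])
    also have "... = R (mu (alpha (beta a)) (R b))"
    proof -
      have Rb: "R b = (\<Sum>(xj,yj)\<leftarrow>r. mu (pw alpha beta 4 3 xj) (mu b (pw alpha beta 6 0 yj)))"
        using Rsh[of _ 3 0] by (simp add: pws' numeral_eq_Suc)
      have "R (mu (alpha (beta a)) (R b)) = (\<Sum>(xi,yi)\<leftarrow>r. mu (pw alpha beta 4 6 xi) (mu (mu (pw alpha beta 1 1 a) (R b)) (pw alpha beta 6 3 yi)))"
        using Rsh[of _ 3 3] by (simp add: pws' numeral_eq_Suc)
      then show ?thesis unfolding Rb muSumL[OF alg] muSumR[OF alg] by simp
    qed
    finally show ?thesis
      using linRR by (simp add: Vector_Spaces.linear_iff add.commute)
  qed
  show ?thesis using linRR cA cB RB by blast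
qed

end
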